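(* For every $\varepsilon>0$ there exists $n_0$ such that every triangle-free graph $G$ on $n\ge n_0$ vertices satisfies \[ |\mathcal I(G)| \;\ge\; \exp\!\left[\left(\frac{\sqrt{2\log 2}}{4}-\varepsilon\right)\sqrt n\,\log n\right]. \]
   Context: $\mathcal I(G)$ denotes the set of all independent sets of $G$ (including the empty set). Logarithms are natural. *)

theory Defs
  imports "HOL-Analysis.Analysis"
begin

definition simple_graph :: "'a set \<Rightarrow> 'a set set \<Rightarrow> bool" where
  "simple_graph V E \<longleftrightarrow> finite V \<and> (\<forall>e\<in>E. e \<subseteq> V \<and> card e = 2)"

definition triangle_free :: "'a set \<Rightarrow> 'a set set \<Rightarrow> bool" where
  "triangle_free V E \<longleftrightarrow> \<not> (\<exists>x\<in>V. \<exists>y\<in>V. \<exists>z\<in>V. {x,y} \<in> E \<and> {y,z} \<in> E \<and> {x,z} \<in> E)"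

definition independent_sets :: "'a set \<Rightarrow> 'a set set \<Rightarrow> 'a set set" where
  "independent_sets V E = {S. S \<subseteq> V \<and> (\<forall>x\<in>S. \<forall>y\<in>S. {x,y} \<notin> E)}"

end

theory Submission imports Defs begin

definition nbr :: "'a set set \<Rightarrow> 'a \<Rightarrow> 'a set" where
  "nbr E v = {u. {u,v} \<in> E}"

lemma pow_sum1:
  fixes l :: real
  assumes "finite A"
  shows "(\<Sum>S\<in>Pow A. l ^ card S) = (1 + l) ^ card A"
  using assms
proof (induction A rule: finite_induct)
  case empty thus ?case by simp
next
  case (insert a A)
  have disj: "Pow A \<inter> insert a ` Pow A = {}" using insert by auto
  have inj: "inj_on (insert a) (Pow A)" using insert by (auto simp: inj_on_def)
  have "(\<Sum>S\<in>Pow (insert a A). l ^ card S) = (\<Sum>S\<in>Pow A. l ^ card S) + (\<Sum>S\<in>insert a ` Pow A. l ^ card S)"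
    unfolding Pow_insert using insert disj by (simp add: sum.union_disjoint)
  also have "(\<Sum>S\<in>insert a ` Pow A. l ^ card S) = (\<Sum>S\<in>Pow A. l ^ card (insert a S))"
    using inj by (simp add: sum.reindex)
  also have "\<dots> = (\<Sum>S\<in>Pow A. l * l ^ card S)"
  proof (rule sum.cong)
    fix S assume "S \<in> Pow A"
    hence "finite S" "a \<notin> S" using insert finite_subset by auto
    thus "l ^ card (insert a S) = l * l ^ card S" by simp
  qed simp
  finally show ?case using insert by (simp add: sum_distrib_left[symmetric] algebra_simps)
qed

lemma pow_sum2:
  fixes l :: real
  assumes "finite A"
  shows "(1 + l) * (\<Sum>S\<in>Pow A. real (card S) * l ^ card S) = real (card A) * l * (1 + l) ^ card A"
  using assms
proof (induction A rule: finite_induct)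
  case empty thus ?case by simp
next
  case (insert a A)
  have disj: "Pow A \<inter> insert a ` Pow A = {}" using insert by auto
  have inj: "inj_on (insert a) (Pow A)" using insert by (auto simp: inj_on_def)
  have "(\<Sum>S\<in>Pow (insert a A). real (card S) * l ^ card S) = (\<Sum>S\<in>Pow A. real (card S) * l ^ card S) + (\<Sum>S\<in>insert a ` Pow A. real (card S) * l ^ card S)"
    unfolding Pow_insert using insert disj by (simp add: sum.union_disjoint)
  also have "(\<Sum>S\<in>insert a ` Pow A. real (card S) * l ^ card S) = (\<Sum>S\<in>Pow A. real (card (insert a S)) * l ^ card (insert a S))"
    using inj by (simp add: sum.reindex)
  also have "\<dots> = (\<Sum>S\<in>Pow A. l * (real (card S) * l ^ card S) + l * l ^ card S)"
  proof (rule sum.cong)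
    fix S assume "S \<in> Pow A"
    hence "finite S" "a \<notin> S" using insert finite_subset by auto
    thus "real (card (insert a S)) * l ^ card (insert a S) = l * (real (card S) * l ^ card S) + l * l ^ card S" 
      by (simp add: algebra_simps)
  qed simp
  also have "\<dots> = l * (\<Sum>S\<in>Pow A. real (card S) * l ^ card S) + l * (1 + l) ^ card A"
  proof -
    have "(\<Sum>S\<in>Pow A. l * l ^ card S) = l * (1 + l) ^ card A"
      using pow_sum1[OF insert(1), of l] by (metis sum_distrib_left)
    thus ?thesis by (simp add: sum.distrib sum_distrib_left)
  qed
  finally have e: "(\<Sum>S\<in>Pow (insert a A). real (card S) * l ^ card S) = (1 + l) * (\<Sum>S\<in>Pow A. real (card S) * l ^ card S) + l * (1 + l) ^ card A"
    by (simp add: algebra_simps)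
  show ?case unfolding e using insert by (simp add: algebra_simps)
qed


lemma pt1:
  fixes l :: real
  assumes l: "l > 0"
  shows "(l/(1+l)) * ((l + (1+l)^y) * exp(-(l*real y))) \<le> l"
proof -
  have "(1+l)^y \<le> exp l ^ y" using l by (intro power_mono) (auto simp: add.commute)
  also have "\<dots> = exp (l * real y)" by (simp add: exp_of_nat_mult[symmetric] mult.commute)
  finally have a: "(1+l)^y * exp(-(l*real y)) \<le> 1" by (simp add: exp_minus field_simps)
  have b: "l * exp(-(l*real y)) \<le> l" using l by (simp add: mult_le_cancel_left1)
  have "(l + (1+l)^y) * exp(-(l*real y)) \<le> 1 + l" using a b by (simp add: algebra_simps)
  hence "(l/(1+l)) * ((l + (1+l)^y) * exp(-(l*real y))) \<le> (l/(1+l)) * (1+l)"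
    using l by (intro mult_left_mono) auto
  thus ?thesis using l by simp
qed

lemma pt2:
  fixes l :: real
  assumes l: "l > 0" and A: "finite A"
  shows "(l/(1+l)^2) * ((l + (1+l)^card A) * real (card A)) \<le> (\<Sum>S\<in>Pow A. real (card S) * l ^ card S)"
proof -
  define f where "f = (\<Sum>S\<in>Pow A. real (card S) * l ^ card S)"
  have e: "(1+l) * f = real (card A) * l * (1+l)^card A" unfolding f_def by (rule pow_sum2[OF A])
  have p1: "(1+l)^card A \<ge> 1" using l by (simp add: one_le_power)
  have "l + (1+l)^card A \<le> (1+l) * (1+l)^card A" using l p1 by (simp add: algebra_simps)
  hence "(l + (1+l)^card A) * (real (card A) * l) \<le> ((1+l) * (1+l)^card A) * (real (card A) * l)"
    using l by (intro mult_right_mono) auto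
  also have "\<dots> = (1+l) * ((1+l) * f)" by (subst e) (simp add: algebra_simps)
  also have "\<dots> = (1+l)^2 * f" by (simp add: power2_eq_square)
  finally have "(l + (1+l)^card A) * (real (card A) * l) \<le> (1+l)^2 * f" .
  hence le: "(l + (1+l)^card A) * (real (card A) * l) / (1+l)^2 \<le> f"
    using l by (simp add: divide_le_eq mult.commute)
  have eq: "(l/(1+l)^2) * ((l + (1+l)^card A) * real (card A)) = (l + (1+l)^card A) * (real (card A) * l) / (1+l)^2"
    using l by (simp add: field_simps)
  show ?thesis unfolding eq using le unfolding f_def .
qed

lemma div_le_self_real: "(x::real) \<ge> 0 \<Longrightarrow> c \<ge> 1 \<Longrightarrow> x / c \<le> x"
  using divide_left_mono[of 1 c x] by simp

lemma exp_tangent: "exp (a::real) * (1 + (x - a)) \<le> exp x"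
proof -
  have "1 + (x - a) \<le> exp (x - a)" by simp
  hence "exp a * (1 + (x - a)) \<le> exp a * exp (x - a)" by (intro mult_left_mono) auto
  thus ?thesis by (simp add: exp_diff)
qed

lemma jensen2:
  fixes q y :: "'a \<Rightarrow> 'b \<Rightarrow> real"
  assumes fA: "finite A" and q: "\<And>a b. q a b \<ge> 0"
    and Q: "Q = (\<Sum>a\<in>A. \<Sum>b\<in>B a. q a b)" "Q > 0"
  defines "m \<equiv> (\<Sum>a\<in>A. \<Sum>b\<in>B a. q a b * y a b) / Q"
  shows "(\<Sum>a\<in>A. \<Sum>b\<in>B a. q a b * exp (-(c * y a b))) \<ge> Q * exp (-(c * m))"
proof -
  have "(\<Sum>a\<in>A. \<Sum>b\<in>B a. q a b * exp (-(c * y a b))) \<ge>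
        (\<Sum>a\<in>A. \<Sum>b\<in>B a. exp (-(c*m)) * q a b - (exp (-(c*m)) * c) * (q a b * y a b) + (exp (-(c*m)) * c * m) * q a b)"
  proof (intro sum_mono)
    fix a b
    have "exp (-(c*m)) * (1 + (-(c * y a b) - -(c*m))) \<le> exp (-(c * y a b))" by (rule exp_tangent)
    hence "q a b * (exp (-(c*m)) * (1 + (-(c * y a b) - -(c*m)))) \<le> q a b * exp (-(c * y a b))"
      using q by (intro mult_left_mono) auto
    thus "exp (-(c*m)) * q a b - (exp (-(c*m)) * c) * (q a b * y a b) + (exp (-(c*m)) * c * m) * q a b \<le> q a b * exp (-(c * y a b))"
      by (simp add: algebra_simps)
  qed
  also have "(\<Sum>a\<in>A. \<Sum>b\<in>B a. exp (-(c*m)) * q a b - (exp (-(c*m)) * c) * (q a b * y a b) + (exp (-(c*m)) * c * m) * q a b)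
     = exp (-(c*m)) * Q - (exp (-(c*m)) * c) * (\<Sum>a\<in>A. \<Sum>b\<in>B a. q a b * y a b) + (exp (-(c*m)) * c * m) * Q"
    unfolding Q(1) by (simp add: sum.distrib sum_subtractf sum_distrib_left)
  also have "(\<Sum>a\<in>A. \<Sum>b\<in>B a. q a b * y a b) = m * Q" unfolding m_def using Q(2) by simp
  finally show ?thesis by (simp add: algebra_simps)
qed

lemma gauss_real: "(\<Sum>j<m. real j) = real m * (real m - 1) / 2"
  by (induction m) (simp_all add: algebra_simps)

lemma exp_cond:
  fixes d u :: real
  assumes d: "0 < d" "d < 1" and u: "u \<ge> 0" and c: "exp (d * u / 2) \<ge> 2 / d"
  shows "exp (d * u) \<ge> (1 - d) * u"
proof -
  have a: "exp (d * u / 2) \<ge> d * u / 2" using exp_ge_add_one_self[of "d*u/2"] by linarith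
  have "exp (d * u) = exp (d * u / 2) * exp (d * u / 2)" by (simp add: exp_add[symmetric])
  also have "\<dots> \<ge> (2 / d) * (d * u / 2)"
    using a c d u by (intro mult_mono) auto
  finally have "exp (d * u) \<ge> u" using d by simp
  moreover have "u \<ge> (1 - d) * u" using d u by (simp add: mult_left_le_one_le)
  ultimately show ?thesis by linarith
qed

lemma alg_id:
  fixes M D q L n d :: real
  assumes "M > 0" "D > 0" "q > 0"
  shows "(L / M) * ((n * (1 - d) * L / (M * D * q)) * (M * (M - 1) / 2)) = n * (1 - d) * L^2 * (M - 1) / (2 * M * D * q)"
  using assms by (simp add: field_simps power2_eq_square)

locale tfg =
  fixes V :: "'a set" and E :: "'a set set"
  assumes sg: "simple_graph V E" and tf: "triangle_free V E"
begin

abbreviation "IS \<equiv> independent_sets V E"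

lemma finV: "finite V" using sg by (simp add: simple_graph_def)

lemma IS_sub: "IS \<subseteq> Pow V" by (auto simp: independent_sets_def)

lemma finIS: "finite IS" using IS_sub finV by (meson finite_Pow_iff finite_subset)

lemma IS_fin: "I \<in> IS \<Longrightarrow> finite I" using IS_sub finV finite_subset by blast

lemma edge: "{u,v} \<in> E \<Longrightarrow> u \<in> V \<and> v \<in> V \<and> u \<noteq> v"
proof -
  assume "{u,v} \<in> E"
  hence "{u,v} \<subseteq> V" "card {u,v} = 2" using sg by (auto simp: simple_graph_def)
  thus ?thesis by (auto split: if_splits)
qed

lemma nbr_sub: "nbr E v \<subseteq> V" using edge by (auto simp: nbr_def)

lemma not_in_nbr: "v \<notin> nbr E v" using edge[of v v] by (auto simp: nbr_def)

lemma nbr_sym: "u \<in> nbr E v \<longleftrightarrow> v \<in> nbr E u" by (auto simp: nbr_def insert_commute)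

lemma nbr_IS: "nbr E v \<in> IS"
proof -
  have "\<not> ({x,y} \<in> E)" if "x \<in> nbr E v" "y \<in> nbr E v" for x y
  proof
    assume xy: "{x,y} \<in> E"
    have a: "{x,v} \<in> E" "{y,v} \<in> E" using that by (auto simp: nbr_def)
    hence "{v,y} \<in> E" by (simp add: insert_commute)
    have "x \<in> V" "y \<in> V" "v \<in> V" using edge a by auto
    thus False using tf xy a \<open>{v,y} \<in> E\<close> unfolding triangle_free_def by blast
  qed
  thus ?thesis using nbr_sub by (auto simp: independent_sets_def)
qed

lemma IS_subset: "I \<in> IS \<Longrightarrow> J \<subseteq> I \<Longrightarrow> J \<in> IS"
  by (auto simp: independent_sets_def)

definition NC where "NC v = insert v (nbr E v)"
definition FF where "FF v = {J \<in> IS. J \<inter> NC v = {}}"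
definition UU where "UU v J = {u \<in> nbr E v. \<forall>w\<in>J. {u,w} \<notin> E}"

lemma UU_sub: "UU v J \<subseteq> nbr E v" by (auto simp: UU_def)
lemma finUU: "finite (UU v J)" using UU_sub nbr_sub finV finite_subset by metis

lemma bij_dec:
  assumes v: "v \<in> V"
  shows "bij_betw (\<lambda>I. (I - NC v, I \<inter> NC v)) IS (SIGMA J:FF v. insert {v} (Pow (UU v J)))"
proof (rule bij_betwI[where g = "\<lambda>(J,S). J \<union> S"])
  show "(\<lambda>I. (I - NC v, I \<inter> NC v)) \<in> IS \<rightarrow> (SIGMA J:FF v. insert {v} (Pow (UU v J)))"
  proof
    fix I assume I: "I \<in> IS"
    have "I - NC v \<in> FF v" using I IS_subset[of I "I - NC v"] by (auto simp: FF_def)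
    moreover have "I \<inter> NC v \<in> insert {v} (Pow (UU v (I - NC v)))"
    proof (cases "v \<in> I")
      case True
      have "I \<inter> nbr E v = {}"
      proof (rule ccontr)
        assume "I \<inter> nbr E v \<noteq> {}"
        then obtain u where "u \<in> I" "{u,v} \<in> E" by (auto simp: nbr_def)
        thus False using I True by (auto simp: independent_sets_def)
      qed
      thus ?thesis using True by (auto simp: NC_def)
    next
      case False
      have "I \<inter> NC v \<subseteq> UU v (I - NC v)"
        using False I by (auto simp: NC_def UU_def independent_sets_def)
      thus ?thesis by auto
    qed
    ultimately show "(I - NC v, I \<inter> NC v) \<in> (SIGMA J:FF v. insert {v} (Pow (UU v J)))" by auto
  qed
  show "(\<lambda>(J,S). J \<union> S) \<in> (SIGMA J:FF v. insert {v} (Pow (UU v J))) \<rightarrow> IS"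
  proof
    fix p assume p: "p \<in> (SIGMA J:FF v. insert {v} (Pow (UU v J)))"
    obtain J S where pJS: "p = (J,S)" by fastforce
    have J: "J \<in> IS" "J \<inter> NC v = {}" and S: "S = {v} \<or> S \<subseteq> UU v J" using p pJS by (auto simp: FF_def)
    show "(case p of (J,S) \<Rightarrow> J \<union> S) \<in> IS"
    proof (cases "S = {v}")
      case True
      have "{x,v} \<notin> E" if "x \<in> J" for x using J that by (auto simp: NC_def nbr_def)
      moreover have "{v,v} \<notin> E" using edge by blast
      ultimately show ?thesis using J True v unfolding pJS
        by (auto simp: independent_sets_def insert_commute)
    next
      case False
      hence S': "S \<subseteq> UU v J" using S by auto
      have SI: "S \<in> IS" using IS_subset[OF nbr_IS] S' UU_sub by blast
      have h1: "{x,y} \<notin> E" if "x \<in> S" "y \<in> J" for x y using S' that by (auto simp: UU_def)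
      hence h2: "{y,x} \<notin> E" if "x \<in> S" "y \<in> J" for x y using that by (metis insert_commute)
      have "J \<union> S \<in> IS" using J SI h1 h2 unfolding independent_sets_def by blast
      thus ?thesis unfolding pJS by simp
    qed
  qed
  show "\<And>I. I \<in> IS \<Longrightarrow> (case (I - NC v, I \<inter> NC v) of (J, S) \<Rightarrow> J \<union> S) = I" by auto
  show "(\<lambda>I. (I - NC v, I \<inter> NC v)) (case p of (J, S) \<Rightarrow> J \<union> S) = p"
    if p: "p \<in> (SIGMA J:FF v. insert {v} (Pow (UU v J)))" for p
  proof -
    obtain J S where pJS: "p = (J,S)" by fastforce
    have J: "J \<inter> NC v = {}" using p pJS by (auto simp: FF_def)
    have "S = {v} \<or> S \<subseteq> UU v J" using p pJS by auto
    hence S: "S \<subseteq> NC v" using UU_sub[of v J] by (auto simp: NC_def)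
    show ?thesis unfolding pJS using J S by auto
  qed
qed

lemma sum_dec:
  assumes v: "v \<in> V"
  shows "(\<Sum>I\<in>IS. f I) = (\<Sum>J\<in>FF v. f (insert v J) + (\<Sum>S\<in>Pow (UU v J). f (J \<union> S)))"
proof -
  have "(\<Sum>I\<in>IS. f I) = (\<Sum>I\<in>IS. (\<lambda>(J,S). f (J \<union> S)) (I - NC v, I \<inter> NC v))"
    by (rule sum.cong) (simp_all add: Un_Diff_Int)
  also have "\<dots> = (\<Sum>p\<in>(SIGMA J:FF v. insert {v} (Pow (UU v J))). (\<lambda>(J,S). f (J \<union> S)) p)"
    by (rule sum.reindex_bij_betw[OF bij_dec[OF v]])
  also have "\<dots> = (\<Sum>J\<in>FF v. \<Sum>S\<in>insert {v} (Pow (UU v J)). f (J \<union> S))"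
    by (rule sum.Sigma[symmetric]) (use finIS finUU in \<open>auto simp: FF_def\<close>)
  also have "\<dots> = (\<Sum>J\<in>FF v. f (insert v J) + (\<Sum>S\<in>Pow (UU v J). f (J \<union> S)))"
  proof (rule sum.cong)
    fix J assume "J \<in> FF v"
    have "{v} \<notin> Pow (UU v J)" using UU_sub not_in_nbr by auto
    thus "(\<Sum>S\<in>insert {v} (Pow (UU v J)). f (J \<union> S)) = f (insert v J) + (\<Sum>S\<in>Pow (UU v J). f (J \<union> S))"
      using finUU by simp
  qed simp
  finally show ?thesis .
qed


definition Zf :: "real \<Rightarrow> real" where "Zf l = (\<Sum>I\<in>IS. l ^ card I)"
definition Wf :: "real \<Rightarrow> real" where "Wf l = (\<Sum>I\<in>IS. real (card I) * l ^ card I)"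

lemma Zf_ge1: "l \<ge> 0 \<Longrightarrow> Zf l \<ge> 1"
proof -
  assume l: "l \<ge> 0"
  have e: "{} \<in> IS" by (simp add: independent_sets_def)
  have "Zf l = l ^ card ({}::'a set) + (\<Sum>I\<in>IS - {{}}. l^card I)" unfolding Zf_def
    by (rule sum.remove[OF finIS e])
  moreover have "(\<Sum>I\<in>IS - {{}}. l^card I) \<ge> 0" using l by (intro sum_nonneg) auto
  ultimately show ?thesis by simp
qed

lemma Wf_ge0: "l \<ge> 0 \<Longrightarrow> Wf l \<ge> 0" unfolding Wf_def by (intro sum_nonneg) auto

lemma FF_fin: "J \<in> FF v \<Longrightarrow> finite J" using IS_fin by (auto simp: FF_def)

lemma card_un: "J \<in> FF v \<Longrightarrow> S \<in> Pow (UU v J) \<Longrightarrow> card (J \<union> S) = card J + card S"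
proof -
  assume J: "J \<in> FF v" and S: "S \<in> Pow (UU v J)"
  have "finite S" using S finUU finite_subset by blast
  moreover have "J \<inter> S = {}" using J S UU_sub[of v J] by (auto simp: FF_def NC_def)
  ultimately show ?thesis using FF_fin[OF J] card_Un_disjoint by blast
qed

lemma card_ins: "J \<in> FF v \<Longrightarrow> card (insert v J) = card J + 1"
  using FF_fin[of J v] by (auto simp: FF_def NC_def)

lemma Zv: "v \<in> V \<Longrightarrow> Zf l = (\<Sum>J\<in>FF v. l ^ card J * (l + (1 + l) ^ card (UU v J)))"
proof -
  assume v: "v \<in> V"
  have "Zf l = (\<Sum>J\<in>FF v. l ^ card (insert v J) + (\<Sum>S\<in>Pow (UU v J). l ^ card (J \<union> S)))"
    unfolding Zf_def by (rule sum_dec[OF v])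
  also have "\<dots> = (\<Sum>J\<in>FF v. l ^ card J * (l + (1 + l) ^ card (UU v J)))"
  proof (rule sum.cong)
    fix J assume J: "J \<in> FF v"
    have "(\<Sum>S\<in>Pow (UU v J). l ^ card (J \<union> S)) = (\<Sum>S\<in>Pow (UU v J). l ^ card J * l ^ card S)"
      by (rule sum.cong) (simp_all add: card_un[OF J] power_add)
    also have "\<dots> = l ^ card J * (1 + l) ^ card (UU v J)"
      using pow_sum1[OF finUU, of l v J] by (metis sum_distrib_left)
    finally show "l ^ card (insert v J) + (\<Sum>S\<in>Pow (UU v J). l ^ card (J \<union> S)) = l ^ card J * (l + (1 + l) ^ card (UU v J))"
      by (simp add: card_ins[OF J] algebra_simps)
  qed simp
  finally show ?thesis .
qed

lemma Ov: "v \<in> V \<Longrightarrow> (\<Sum>I\<in>IS. if v \<in> I then (l::real) ^ card I else 0) = (\<Sum>J\<in>FF v. l ^ card J * l)"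
proof -
  assume v: "v \<in> V"
  have "(\<Sum>I\<in>IS. if v \<in> I then l ^ card I else 0) = (\<Sum>J\<in>FF v. (if v \<in> insert v J then l ^ card (insert v J) else 0) + (\<Sum>S\<in>Pow (UU v J). if v \<in> J \<union> S then l ^ card (J \<union> S) else 0))"
    by (rule sum_dec[OF v])
  also have "\<dots> = (\<Sum>J\<in>FF v. l ^ card J * l)"
  proof (rule sum.cong)
    fix J assume J: "J \<in> FF v"
    have "v \<notin> J" using J by (auto simp: FF_def NC_def)
    moreover have "v \<notin> S" if "S \<in> Pow (UU v J)" for S using that UU_sub[of v J] not_in_nbr by auto
    ultimately show "(if v \<in> insert v J then l ^ card (insert v J) else 0) + (\<Sum>S\<in>Pow (UU v J). if v \<in> J \<union> S then l ^ card (J \<union> S) else 0) = l ^ card J * l"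
      by (simp add: card_ins[OF J] power_commutes)
  qed simp
  finally show ?thesis .
qed

lemma Mv: "v \<in> V \<Longrightarrow> (\<Sum>I\<in>IS. real (card (I \<inter> nbr E v)) * l ^ card I) = (\<Sum>J\<in>FF v. l ^ card J * (\<Sum>S\<in>Pow (UU v J). real (card S) * l ^ card S))"
proof -
  assume v: "v \<in> V"
  have "(\<Sum>I\<in>IS. real (card (I \<inter> nbr E v)) * l ^ card I) = (\<Sum>J\<in>FF v. real (card (insert v J \<inter> nbr E v)) * l ^ card (insert v J) + (\<Sum>S\<in>Pow (UU v J). real (card ((J \<union> S) \<inter> nbr E v)) * l ^ card (J \<union> S)))"
    by (rule sum_dec[OF v])
  also have "\<dots> = (\<Sum>J\<in>FF v. l ^ card J * (\<Sum>S\<in>Pow (UU v J). real (card S) * l ^ card S))"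
  proof (rule sum.cong)
    fix J assume J: "J \<in> FF v"
    have "insert v J \<inter> nbr E v = {}" using J not_in_nbr by (auto simp: FF_def NC_def)
    moreover have "(\<Sum>S\<in>Pow (UU v J). real (card ((J \<union> S) \<inter> nbr E v)) * l ^ card (J \<union> S)) = (\<Sum>S\<in>Pow (UU v J). l ^ card J * (real (card S) * l ^ card S))"
    proof (rule sum.cong)
      fix S assume S: "S \<in> Pow (UU v J)"
      have "(J \<union> S) \<inter> nbr E v = S" using J S UU_sub[of v J] by (auto simp: FF_def NC_def)
      thus "real (card ((J \<union> S) \<inter> nbr E v)) * l ^ card (J \<union> S) = l ^ card J * (real (card S) * l ^ card S)"
        by (simp add: card_un[OF J S] power_add)
    qed simp
    ultimately show "real (card (insert v J \<inter> nbr E v)) * l ^ card (insert v J) + (\<Sum>S\<in>Pow (UU v J). real (card ((J \<union> S) \<inter> nbr E v)) * l ^ card (J \<union> S)) = l ^ card J * (\<Sum>S\<in>Pow (UU v J). real (card S) * l ^ card S)"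
      by (simp add: sum_distrib_left)
  qed simp
  finally show ?thesis .
qed

lemma W_eq: "Wf l = (\<Sum>v\<in>V. \<Sum>I\<in>IS. if v \<in> I then (l::real) ^ card I else 0)"
proof -
  have "(\<Sum>v\<in>V. \<Sum>I\<in>IS. if v \<in> I then l ^ card I else 0) = (\<Sum>I\<in>IS. \<Sum>v\<in>V. if v \<in> I then l ^ card I else 0)"
    by (rule sum.swap)
  also have "\<dots> = (\<Sum>I\<in>IS. real (card I) * l ^ card I)"
  proof (rule sum.cong)
    fix I assume I: "I \<in> IS"
    have "(\<Sum>v\<in>V. if v \<in> I then l ^ card I else 0) = (\<Sum>v\<in>V \<inter> I. l ^ card I)"
      by (rule sum.inter_restrict[OF finV, symmetric])
    also have "V \<inter> I = I" using I IS_sub by auto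
    finally show "(\<Sum>v\<in>V. if v \<in> I then l ^ card I else 0) = real (card I) * l ^ card I" by simp
  qed simp
  finally show ?thesis unfolding Wf_def by simp
qed

lemma card_nbr_sum: "I \<in> IS \<Longrightarrow> (\<Sum>v\<in>V. real (card (I \<inter> nbr E v))) = (\<Sum>u\<in>I. real (card (nbr E u)))"
proof -
  assume I: "I \<in> IS"
  have finI: "finite I" using IS_fin[OF I] .
  have "(\<Sum>v\<in>V. real (card (I \<inter> nbr E v))) = (\<Sum>v\<in>V. \<Sum>u\<in>I. if u \<in> nbr E v then 1 else 0)"
  proof (rule sum.cong)
    fix v
    have "(\<Sum>u\<in>I. if u \<in> nbr E v then 1 else (0::real)) = (\<Sum>u\<in>I \<inter> nbr E v. 1)"
      by (rule sum.inter_restrict[OF finI, symmetric])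
    thus "real (card (I \<inter> nbr E v)) = (\<Sum>u\<in>I. if u \<in> nbr E v then 1 else 0)" by simp
  qed simp
  also have "\<dots> = (\<Sum>u\<in>I. \<Sum>v\<in>V. if u \<in> nbr E v then 1 else 0)" by (rule sum.swap)
  also have "\<dots> = (\<Sum>u\<in>I. real (card (nbr E u)))"
  proof (rule sum.cong)
    fix u
    have "(\<Sum>v\<in>V. if v \<in> nbr E u then 1 else (0::real)) = (\<Sum>v\<in>V \<inter> nbr E u. 1)"
      by (rule sum.inter_restrict[OF finV, symmetric])
    also have "V \<inter> nbr E u = nbr E u" using nbr_sub by auto
    finally show "(\<Sum>v\<in>V. if u \<in> nbr E v then 1 else 0) = real (card (nbr E u))"
      by (simp add: nbr_sym[of u])
  qed simp
  finally show ?thesis .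
qed

lemma M_bound:
  assumes l: "l \<ge> 0" and D: "\<forall>u\<in>V. real (card (nbr E u)) \<le> D"
  shows "(\<Sum>v\<in>V. \<Sum>I\<in>IS. real (card (I \<inter> nbr E v)) * l ^ card I) \<le> D * Wf l"
proof -
  have "(\<Sum>v\<in>V. \<Sum>I\<in>IS. real (card (I \<inter> nbr E v)) * l ^ card I) = (\<Sum>I\<in>IS. \<Sum>v\<in>V. real (card (I \<inter> nbr E v)) * l ^ card I)"
    by (rule sum.swap)
  also have "\<dots> = (\<Sum>I\<in>IS. (\<Sum>u\<in>I. real (card (nbr E u))) * l ^ card I)"
    by (rule sum.cong) (simp_all add: card_nbr_sum sum_distrib_right[symmetric])
  also have "\<dots> \<le> (\<Sum>I\<in>IS. (real (card I) * D) * l ^ card I)"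
  proof (rule sum_mono)
    fix I assume I: "I \<in> IS"
    have "(\<Sum>u\<in>I. real (card (nbr E u))) \<le> (\<Sum>u\<in>I. D)"
      by (rule sum_mono) (use D I IS_sub in auto)
    thus "(\<Sum>u\<in>I. real (card (nbr E u))) * l ^ card I \<le> (real (card I) * D) * l ^ card I"
      using l by (intro mult_right_mono) auto
  qed
  also have "\<dots> = D * Wf l" unfolding Wf_def by (simp add: sum_distrib_left algebra_simps)
  finally show ?thesis .
qed


lemma hardcore:
  assumes l: "l > 0" and D: "D > 0" and t: "t \<ge> 0" and deg: "\<forall>u\<in>V. real (card (nbr E u)) \<le> D"
  shows "Wf l \<ge> Zf l * real (card V) * min (l * exp (-t)) (t / D) / (1+l)^2"
proof -
  define q where "q v J = l ^ card J * (l + (1+l)^card (UU v J))" for v J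
  define y where "y v J = real (card (UU v J))" for v J
  define Q where "Q = (\<Sum>v\<in>V. \<Sum>J\<in>FF v. q v J)"
  define S1 where "S1 = (\<Sum>v\<in>V. \<Sum>J\<in>FF v. q v J * y v J)"
  have qnn: "q v J \<ge> 0" for v J using l unfolding q_def by simp
  have "Q = (\<Sum>v\<in>V. Zf l)" unfolding Q_def q_def by (rule sum.cong) (simp_all add: Zv)
  hence Qeq: "Q = real (card V) * Zf l" by simp
  have W1: "Wf l \<ge> (l/(1+l)) * (\<Sum>v\<in>V. \<Sum>J\<in>FF v. q v J * exp(-(l * y v J)))"
  proof -
    have "(l/(1+l)) * (\<Sum>v\<in>V. \<Sum>J\<in>FF v. q v J * exp(-(l * y v J))) = (\<Sum>v\<in>V. \<Sum>J\<in>FF v. l ^ card J * ((l/(1+l)) * ((l + (1+l)^card (UU v J)) * exp(-(l * real (card (UU v J)))))))"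
      by (simp add: sum_distrib_left q_def y_def algebra_simps)
    also have "\<dots> \<le> (\<Sum>v\<in>V. \<Sum>J\<in>FF v. l ^ card J * l)"
      by (intro sum_mono mult_left_mono pt1 l) (use l in auto)
    also have "\<dots> = Wf l" using W_eq Ov by simp
    finally show ?thesis .
  qed
  have W2: "D * Wf l \<ge> (l/(1+l)^2) * S1"
  proof -
    have "(l/(1+l)^2) * S1 = (\<Sum>v\<in>V. \<Sum>J\<in>FF v. l ^ card J * ((l/(1+l)^2) * ((l + (1+l)^card (UU v J)) * real (card (UU v J)))))"
      by (simp add: sum_distrib_left S1_def q_def y_def algebra_simps)
    also have "\<dots> \<le> (\<Sum>v\<in>V. \<Sum>J\<in>FF v. l ^ card J * (\<Sum>S\<in>Pow (UU v J). real (card S) * l ^ card S))"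
      by (intro sum_mono mult_left_mono pt2 l finUU) (use l in auto)
    also have "\<dots> = (\<Sum>v\<in>V. \<Sum>I\<in>IS. real (card (I \<inter> nbr E v)) * l ^ card I)"
      using Mv by simp
    also have "\<dots> \<le> D * Wf l" by (rule M_bound) (use l deg in auto)
    finally show ?thesis .
  qed
  show ?thesis
  proof (cases "V = {}")
    case True thus ?thesis using Wf_ge0[of l] l by simp
  next
    case False
    hence cV: "real (card V) > 0" using finV by (simp add: card_gt_0_iff)
    have Zp: "Zf l \<ge> 1" using Zf_ge1 l by simp
    hence Qp: "Q > 0" using cV Qeq by (simp add: mult_pos_pos)
    have J: "(\<Sum>v\<in>V. \<Sum>J\<in>FF v. q v J * exp(-(l * y v J))) \<ge> Q * exp (-(l * (S1 / Q)))"
      unfolding S1_def by (rule jensen2[OF finV qnn Q_def Qp])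
    have lp2: "(1+l)^2 > 0" using l by simp
    show ?thesis
    proof (cases "l * (S1 / Q) \<le> t")
      case True
      hence "exp (-(l * (S1 / Q))) \<ge> exp (-t)" by simp
      hence "Q * exp (-(l * (S1 / Q))) \<ge> Q * exp(-t)" using Qp by (intro mult_left_mono) auto
      with J have "(\<Sum>v\<in>V. \<Sum>J\<in>FF v. q v J * exp(-(l * y v J))) \<ge> Q * exp(-t)" by linarith
      hence "Wf l \<ge> (l/(1+l)) * (Q * exp(-t))" using W1 l
        by (meson less_eq_real_def mult_left_mono order_trans divide_nonneg_pos add_pos_pos zero_less_one)
      moreover have "(l/(1+l)) * (Q * exp(-t)) \<ge> Q * (l * exp(-t)) / (1+l)^2"
      proof -
        have "Q * (l * exp(-t)) / (1+l)^2 = ((l/(1+l)) * (Q * exp(-t))) / (1+l)"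
          by (simp add: power2_eq_square field_simps)
        also have "\<dots> \<le> (l/(1+l)) * (Q * exp(-t))"
          using l Qp by (intro div_le_self_real) auto
        finally show ?thesis .
      qed
      moreover have "Q * (l * exp(-t)) / (1+l)^2 \<ge> Q * min (l * exp (-t)) (t / D) / (1+l)^2"
        using Qp lp2 by (intro divide_right_mono mult_left_mono) auto
      ultimately show ?thesis using Qeq by (simp add: mult.commute)
    next
      case False
      hence "S1 > t * Q / l" using l Qp by (simp add: field_simps)
      hence "(l/(1+l)^2) * S1 \<ge> (l/(1+l)^2) * (t * Q / l)" using l by (intro mult_left_mono) auto
      also have "(l/(1+l)^2) * (t * Q / l) = t * Q / (1+l)^2" using l by (simp add: field_simps)
      finally have "D * Wf l \<ge> t * Q / (1+l)^2" using W2 by linarith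
      hence "(Q * t / (1+l)^2) / D \<le> Wf l" by (subst pos_divide_le_eq[OF D]) (metis mult.commute)
      hence "Wf l \<ge> Q * (t / D) / (1+l)^2" by (simp add: mult.commute)
      moreover have "Q * (t / D) / (1+l)^2 \<ge> Q * min (l * exp (-t)) (t / D) / (1+l)^2"
        using Qp lp2 by (intro divide_right_mono mult_left_mono) auto
      ultimately show ?thesis using Qeq by (simp add: mult.commute)
    qed
  qed
qed


lemma Zf_pos: "l \<ge> 0 \<Longrightarrow> Zf l > 0" using Zf_ge1[of l] by simp

lemma card_IS: "Zf 1 = real (card IS)" unfolding Zf_def by simp

lemma tangent:
  assumes l: "l > 0" and mu: "mu > 0"
  shows "ln (Zf mu) \<ge> ln (Zf l) + ln (mu / l) * (Wf l / Zf l)"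
proof -
  define s where "s = ln (mu / l)"
  define m where "m = Wf l / Zf l"
  have Zp: "Zf l > 0" using Zf_pos l by simp
  have "Zf mu = (\<Sum>I\<in>IS. l ^ card I * exp (s * real (card I)))"
    unfolding Zf_def
  proof (rule sum.cong)
    fix I
    have "exp (s * real (card I)) = exp s ^ card I" by (metis exp_of_nat_mult mult.commute)
    also have "exp s = mu / l" using l mu by (simp add: s_def)
    finally have "exp (s * real (card I)) = (mu / l) ^ card I" .
    thus "mu ^ card I = l ^ card I * exp (s * real (card I))" using l
      by (simp add: power_divide)
  qed simp
  also have "\<dots> \<ge> (\<Sum>I\<in>IS. l ^ card I * (exp (s * m) * (1 + (s * real (card I) - s * m))))"
    by (intro sum_mono mult_left_mono exp_tangent) (use l in auto)
  also have "(\<Sum>I\<in>IS. l ^ card I * (exp (s * m) * (1 + (s * real (card I) - s * m)))) =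
      exp (s * m) * (Zf l + s * Wf l - s * m * Zf l)"
    unfolding Zf_def Wf_def by (simp add: algebra_simps sum.distrib sum_subtractf sum_distrib_left)
  also have "\<dots> = exp (s * m) * Zf l" using Zp by (simp add: m_def)
  finally have "exp (s * m) * Zf l \<le> Zf mu" .
  hence "ln (exp (s * m) * Zf l) \<le> ln (Zf mu)" using Zp Zf_pos[of mu] mu by (subst ln_le_cancel_iff) auto
  thus ?thesis using Zp by (simp add: ln_mult s_def m_def)
qed

lemma tele:
  fixes L :: real and m :: nat
  assumes m: "m > 0"
  defines "lam \<equiv> \<lambda>j::nat. exp ((real j - real m) * L / real m)"
  shows "k \<le> m \<Longrightarrow> ln (Zf (lam k)) \<ge> (L / real m) * (\<Sum>j<k. Wf (lam j) / Zf (lam j))"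
proof (induction k)
  case 0
  show ?case using Zf_ge1[of "lam 0"] by (simp add: lam_def)
next
  case (Suc k)
  have lp: "lam k > 0" "lam (Suc k) > 0" by (simp_all add: lam_def)
  have "ln (lam (Suc k) / lam k) = L / real m"
    unfolding lam_def using m by (simp add: exp_diff[symmetric] field_simps)
  hence "ln (Zf (lam (Suc k))) \<ge> ln (Zf (lam k)) + (L / real m) * (Wf (lam k) / Zf (lam k))"
    using tangent[OF lp] by simp
  moreover have "ln (Zf (lam k)) \<ge> (L / real m) * (\<Sum>j<k. Wf (lam j) / Zf (lam j))"
    using Suc by simp
  ultimately show ?case by (simp add: algebra_simps)
qed


lemma thmA:
  fixes D d :: real and m :: nat
  assumes D1: "D \<ge> 1" and deg: "\<forall>u\<in>V. real (card (nbr E u)) \<le> D"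
    and m: "m > 0" and d: "0 < d" "d < 1"
    and cond: "exp (d * (ln D / real m) / 2) \<ge> 2 / d"
  shows "ln (real (card IS)) \<ge> real (card V) * (1 - d) * (ln D)^2 * (real m - 1) / (2 * real m * D * (1 + exp (- (ln D / real m)))^2)"
proof -
  define L where "L = ln D"
  define x where "x = exp (- (L / real m))"
  define n where "n = real (card V)"
  define lam where "lam = (\<lambda>j::nat. exp ((real j - real m) * L / real m))"
  define K where "K = n * (1 - d) * L / (real m * D * (1 + x)^2)"
  have L0: "L \<ge> 0" using D1 by (simp add: L_def)
  have Dp: "D > 0" using D1 by simp
  have x0: "x > 0" by (simp add: x_def)
  have K0: "K \<ge> 0" using L0 d Dp x0 m by (simp add: K_def n_def)
  have rj: "Wf (lam j) / Zf (lam j) \<ge> K * real j" if j: "j < m" for j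
  proof (cases "j = 0")
    case True
    have "Wf (lam j) / Zf (lam j) \<ge> 0"
      using Wf_ge0[of "lam j"] Zf_pos[of "lam j"] by (simp add: lam_def)
    thus ?thesis using True by simp
  next
    case False
    define u where "u = real j * L / real m"
    define t where "t = (1 - d) * u"
    define l where "l = lam j"
    have lp: "l > 0" by (simp add: l_def lam_def)
    have "L \<le> real j * L" using False L0 mult_right_mono[of 1 "real j" L] by simp
    hence u0: "u \<ge> L / real m" using m unfolding u_def by (intro divide_right_mono) auto
    have uu: "u \<ge> 0" using L0 m by (simp add: u_def)
    have t0: "t \<ge> 0" using d uu by (simp add: t_def)
    have "d * (L / real m) \<le> d * u" using u0 d by (intro mult_left_mono) auto
    hence e1: "exp (d * u / 2) \<ge> exp (d * (L / real m) / 2)" by simp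
    have c2: "exp (d * u / 2) \<ge> 2 / d" using e1 cond unfolding L_def by linarith
    have eu: "exp (d * u) \<ge> t" unfolding t_def by (rule exp_cond[OF d uu c2])
    have "l * exp (- t) * D = exp (d * u)"
    proof -
      have "l * exp (- t) * D = exp ((real j - real m) * L / real m + - t + L)"
        using Dp by (simp add: l_def lam_def exp_add L_def exp_diff exp_minus field_simps)
      also have "(real j - real m) * L / real m + - t + L = d * u"
        using m by (simp add: t_def u_def field_simps)
      finally show ?thesis .
    qed
    hence "l * exp (- t) * D \<ge> t" using eu by simp
    hence mn: "min (l * exp (- t)) (t / D) = t / D" using Dp by (simp add: pos_divide_le_eq)
    have lx: "l \<le> x"
    proof -
      have "(real j - real m) * L \<le> (-1::real) * L" using j L0 by (intro mult_right_mono) auto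
      hence "(real j - real m) * L / real m \<le> (-1) * L / real m" using m by (intro divide_right_mono) auto
      hence "(real j - real m) * L / real m \<le> - (L / real m)" by simp
      thus ?thesis by (simp add: l_def lam_def x_def)
    qed
    have H: "Wf l \<ge> Zf l * n * (t / D) / (1+l)^2"
      using hardcore[OF lp Dp t0 deg] mn by (simp add: n_def)
    have Zp: "Zf l > 0" using Zf_pos lp by simp
    have "Wf l / Zf l \<ge> n * (t / D) / (1+l)^2" using H Zp by (simp add: field_simps)
    moreover have "n * (t / D) / (1+l)^2 \<ge> n * (t / D) / (1+x)^2"
      using lx lp t0 Dp by (intro divide_left_mono mult_nonneg_nonneg power_mono mult_pos_pos) (auto simp: n_def)
    moreover have "n * (t / D) / (1+x)^2 = K * real j"
      using m by (simp add: K_def t_def u_def field_simps)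
    ultimately show ?thesis by (simp add: l_def)
  qed
  have "ln (Zf (lam m)) \<ge> (L / real m) * (\<Sum>j<m. Wf (lam j) / Zf (lam j))"
    using tele[OF m, where L=L and k=m] by (simp add: lam_def)
  moreover have "(\<Sum>j<m. Wf (lam j) / Zf (lam j)) \<ge> (\<Sum>j<m. K * real j)"
    by (intro sum_mono rj) auto
  moreover have "(\<Sum>j<m. K * real j) = K * (real m * (real m - 1) / 2)"
    by (simp add: sum_distrib_left[symmetric] gauss_real)
  moreover have "lam m = 1" by (simp add: lam_def)
  moreover have "L / real m \<ge> 0" using L0 by simp
  ultimately have "ln (real (card IS)) \<ge> (L / real m) * (K * (real m * (real m - 1) / 2))"
    by (metis card_IS mult_left_mono order_trans)
  also have "(L / real m) * (K * (real m * (real m - 1) / 2)) = n * (1 - d) * L^2 * (real m - 1) / (2 * real m * D * (1 + x)^2)"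
    unfolding K_def by (rule alg_id) (use m Dp x0 in auto)
  finally show ?thesis by (simp add: n_def L_def x_def)
qed


lemma big_deg: "v \<in> V \<Longrightarrow> real (card IS) \<ge> 2 ^ card (nbr E v)"
proof -
  assume v: "v \<in> V"
  have "Pow (nbr E v) \<subseteq> IS" using IS_subset[OF nbr_IS] by blast
  hence "card (Pow (nbr E v)) \<le> card IS" using finIS by (intro card_mono) auto
  moreover have "finite (nbr E v)" using nbr_sub finV finite_subset by blast
  ultimately have "2 ^ card (nbr E v) \<le> card IS" by (simp add: card_Pow)
  thus ?thesis by (metis of_nat_le_iff of_nat_numeral of_nat_power)
qed

lemma card_IS_pos: "real (card IS) \<ge> 1"
  using Zf_ge1[of 1] card_IS by simp

end

lemma asym:
  fixes N c c' \<eta> \<delta> L D x :: real and m :: nat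
  assumes eta: "0 < \<eta>" "\<eta> < 1" and dl: "\<delta> = \<eta>/4" and mm: "real m \<ge> 4/\<eta>"
    and c: "c > 0" "8*c*c' = 1" and N: "N > 0" "ln N > 0" and D: "D = c' * sqrt N * ln N"
    and L: "L \<ge> ln N / 2" and x: "0 \<le> x" "x \<le> \<eta>/6"
  shows "N*(1-\<delta>)*L^2*(real m - 1)/(2*real m*D*(1+x)^2) \<ge> (c - \<eta>*c)* sqrt N*ln N"
proof -
  define P where "P = sqrt N * ln N"
  have sN: "sqrt N > 0" using N by simp
  have P0: "P > 0" using sN N by (simp add: P_def)
  have c'0: "c' > 0" using c by (metis mult_pos_pos zero_less_mult_pos zero_less_one zero_less_numeral)
  have D0: "D > 0" using D c'0 P0 unfolding P_def by (metis mult.assoc mult_pos_pos)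
  have m0: "real m > 0" using mm eta by (smt (verit) divide_pos_pos)
  have L0: "L \<ge> 0" using L N(2) by linarith
  have A: "L^2 \<ge> (ln N)^2/4"
  proof -
    have "(ln N / 2)^2 \<le> L^2" using L N by (intro power_mono) auto
    thus ?thesis by (simp add: power_divide)
  qed
  have B: "(1-\<delta>)*((real m - 1)/real m) \<ge> 1 - \<eta>/2"
  proof -
    have "1/real m \<le> \<eta>/4" using mm eta m0 by (simp add: field_simps)
    hence "(real m - 1)/real m \<ge> 1 - \<eta>/4" using m0 by (simp add: diff_divide_distrib)
    hence "(1-\<eta>/4)*((real m - 1)/real m) \<ge> (1-\<eta>/4)*(1-\<eta>/4)" using eta
      by (intro mult_left_mono) auto
    hence "(1-\<delta>)*((real m - 1)/real m) \<ge> (1-\<eta>/4)*(1-\<eta>/4)" unfolding dl .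
    moreover have "(1-\<eta>/4)*(1-\<eta>/4) \<ge> 1 - \<eta>/2" by (simp add: algebra_simps)
    ultimately show ?thesis by linarith
  qed
  have C: "(1+x)^2 \<le> 1 + \<eta>/2"
  proof -
    have "(1+x)^2 = 1 + x*(2+x)" by (simp add: power2_eq_square algebra_simps)
    also have "x*(2+x) \<le> (\<eta>/6)*3" using x eta by (intro mult_mono) auto
    finally show ?thesis by simp
  qed
  have ND: "N / D = sqrt N / (c' * ln N)"
    using D N sN c'0 by (simp add: field_simps real_sqrt_mult[symmetric])
  have E1: "(N/D) * L^2 \<ge> 2*c*P"
  proof -
    have "(N/D) * L^2 \<ge> (N/D) * ((ln N)^2/4)" using A ND sN c'0 N by (intro mult_left_mono) auto
    also have "(N/D) * ((ln N)^2/4) = 2*c*P"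
      unfolding ND P_def using c N c'0 by (simp add: field_simps power2_eq_square)
    finally show ?thesis .
  qed
  have "N*(1-\<delta>)*L^2*(real m - 1)/(2*real m*D*(1+x)^2) = ((N/D) * L^2) * ((1-\<delta>)*((real m - 1)/real m)) / (2*(1+x)^2)"
    using m0 D0 by (simp add: field_simps)
  also have "\<dots> \<ge> (2*c*P) * (1 - \<eta>/2) / (2*(1 + \<eta>/2))"
  proof -
    have h1: "(2*c*P) * (1 - \<eta>/2) \<le> ((N/D) * L^2) * ((1-\<delta>)*((real m - 1)/real m))"
    proof -
      have "0 < 2*c*P" using c P0 by simp
      hence X0: "0 \<le> (N/D) * L^2" using E1 by linarith
      show ?thesis by (rule mult_mono[OF E1 B X0]) (use eta in simp)
    qed
    have h2: "0 < 2*(1+x)^2" using x by simp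
    have h4: "2*(1+x)^2 \<le> 2*(1 + \<eta>/2)" using C by simp
    have h3: "0 \<le> (2*c*P) * (1 - \<eta>/2)" using c P0 eta by simp
    show ?thesis by (rule frac_le[OF order_trans[OF h3 h1] h1 h2 h4])
  qed
  finally have F0: "N*(1-\<delta>)*L^2*(real m - 1)/(2*real m*D*(1+x)^2) \<ge> (2*c*P) * (1 - \<eta>/2) / (2*(1 + \<eta>/2))" .
  have eqq: "(2*c*P) * (1 - \<eta>/2) / (2*(1 + \<eta>/2)) = c*P*((1 - \<eta>/2)/(1 + \<eta>/2))" using eta by (simp add: field_simps)
  have F: "N*(1-\<delta>)*L^2*(real m - 1)/(2*real m*D*(1+x)^2) \<ge> c*P*((1 - \<eta>/2)/(1 + \<eta>/2))"
    using F0 unfolding eqq .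
  have G: "(1 - \<eta>/2)/(1 + \<eta>/2) \<ge> 1 - \<eta>" using eta by (simp add: field_simps)
  have "c*P*((1 - \<eta>/2)/(1 + \<eta>/2)) \<ge> c*P*(1-\<eta>)" using G c P0 by (intro mult_left_mono) auto
  with F show ?thesis by (simp add: P_def algebra_simps)
qed


theorem corollary1p3:
  shows "\<forall>\<epsilon>>0::real. \<exists>n0::nat. \<forall>(V::nat set) (E::nat set set).
     simple_graph V E \<and> triangle_free V E \<and> card V \<ge> n0 \<longrightarrow>
     real (card (independent_sets V E)) \<ge>
       exp ((sqrt (2 * ln 2) / 4 - \<epsilon>) * sqrt (real (card V)) * ln (real (card V)))"
proof (intro allI impI)
  fix \<epsilon> :: real assume \<epsilon>: "\<epsilon> > 0"
  define c where "c = sqrt (2 * ln 2) / 4"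
  have c0: "c > 0" by (simp add: c_def)
  have csq: "c * c = ln 2 / 8"
  proof -
    have "sqrt (2 * ln 2) * sqrt (2 * ln 2) = 2 * ln 2" by simp
    thus ?thesis by (simp add: c_def field_simps)
  qed
  show "\<exists>n0::nat. \<forall>(V::nat set) (E::nat set set).
     simple_graph V E \<and> triangle_free V E \<and> card V \<ge> n0 \<longrightarrow>
     real (card (independent_sets V E)) \<ge>
       exp ((sqrt (2 * ln 2) / 4 - \<epsilon>) * sqrt (real (card V)) * ln (real (card V)))"
  proof (cases "\<epsilon> \<ge> c")
    case True
    show ?thesis
    proof (intro exI allI impI)
      fix V :: "nat set" and E :: "nat set set"
      assume H: "simple_graph V E \<and> triangle_free V E \<and> card V \<ge> 1"
      interpret tfg V E using H by unfold_locales auto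
      have "real (card V) \<ge> 1" using H by simp
      hence "sqrt (real (card V)) * ln (real (card V)) \<ge> 0" by simp
      hence "(sqrt (2 * ln 2) / 4 - \<epsilon>) * sqrt (real (card V)) * ln (real (card V)) \<le> 0"
        using True unfolding c_def by (metis mult.assoc mult_nonneg_nonpos2 diff_le_0_iff_le)
      hence "exp ((sqrt (2 * ln 2) / 4 - \<epsilon>) * sqrt (real (card V)) * ln (real (card V))) \<le> 1" by simp
      thus "real (card (independent_sets V E)) \<ge> exp ((sqrt (2 * ln 2) / 4 - \<epsilon>) * sqrt (real (card V)) * ln (real (card V)))"
        using card_IS_pos by linarith
    qed
  next
    case False
    define \<eta> where "\<eta> = \<epsilon> / c"
    have eta: "0 < \<eta>" "\<eta> < 1" using \<epsilon> c0 False by (auto simp: \<eta>_def field_simps)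
    define \<delta> where "\<delta> = \<eta> / 4"
    have dl: "0 < \<delta>" "\<delta> < 1" using eta by (auto simp: \<delta>_def)
    define m where "m = nat \<lceil>4 / \<eta>\<rceil>"
    have mm: "real m \<ge> 4 / \<eta>" unfolding m_def by (rule real_nat_ceiling_ge)
    have "4 / \<eta> > 0" using eta by simp
    hence "real m > 0" using mm by linarith
    hence m0: "m > 0" by simp
    define c' where "c' = c / ln 2"
    have c'0: "c' > 0" using c0 by (simp add: c'_def)
    have cc': "8 * c * c' = 1" using csq by (simp add: c'_def field_simps)
    have c'ln: "c' * ln 2 = c" by (simp add: c'_def)
    define M where "M = max (1 / c') (max (2 * real m * ln (6 / \<eta>)) ((4 * real m / \<delta>) * ln (2 / \<delta>)))"
    show ?thesis
    proof (intro exI allI impI)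
      fix V :: "nat set" and E :: "nat set set"
      assume H: "simple_graph V E \<and> triangle_free V E \<and> card V \<ge> nat \<lceil>exp M\<rceil>"
      interpret tfg V E using H by unfold_locales auto
      define N where "N = real (card V)"
      have NM: "N \<ge> exp M" using H unfolding N_def by linarith
      hence N0: "N > 0" using exp_gt_zero[of M] by linarith
      have lnM: "ln N \<ge> M" using NM N0 by (metis exp_gt_zero ln_exp ln_le_cancel_iff)
      have lnc: "ln N \<ge> 1 / c'" using lnM unfolding M_def by linarith
      have "1 / c' > 0" using c'0 by simp
      hence lnN0: "ln N > 0" using lnc by linarith
      have N1: "N > 1" using lnN0 N0 by (simp add: ln_gt_zero_iff)
      have sN: "sqrt N \<ge> 1" using N1 by simp
      define D where "D = c' * sqrt N * ln N"
      have cl1: "c' * ln N \<ge> 1" using lnc c'0 by (simp add: field_simps)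
      have DsN: "D \<ge> sqrt N"
      proof -
        have "sqrt N * 1 \<le> sqrt N * (c' * ln N)" using cl1 sN by (intro mult_left_mono) auto
        thus ?thesis by (simp add: D_def algebra_simps)
      qed
      have D1: "D \<ge> 1" using DsN sN by linarith
      have LN: "ln D \<ge> ln N / 2"
      proof -
        have "ln (sqrt N) \<le> ln D" using DsN sN D1 by (subst ln_le_cancel_iff) auto
        thus ?thesis using N0 by (simp add: ln_sqrt)
      qed
      have goal: "ln (real (card IS)) \<ge> (c - \<eta> * c) * sqrt N * ln N \<or>
                  real (card IS) \<ge> exp ((c - \<epsilon>) * sqrt N * ln N)"
      proof (cases "\<exists>v\<in>V. real (card (nbr E v)) \<ge> D")
        case True
        then obtain v where v: "v \<in> V" "real (card (nbr E v)) \<ge> D" by blast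
        have "real (card IS) \<ge> 2 ^ card (nbr E v)" by (rule big_deg[OF v(1)])
        also have "(2::real) ^ card (nbr E v) = 2 powr real (card (nbr E v))" by (simp add: powr_realpow)
        also have "\<dots> \<ge> 2 powr D" using v(2) by (intro powr_mono) auto
        also have "2 powr D = exp (c * sqrt N * ln N)"
          by (simp add: powr_def D_def c'ln[symmetric] algebra_simps)
        also have "exp (c * sqrt N * ln N) \<ge> exp ((c - \<epsilon>) * sqrt N * ln N)"
        proof -
          have "0 \<le> \<epsilon> * (sqrt N * ln N)" using \<epsilon> lnN0 sN by simp
          thus ?thesis by (simp add: algebra_simps)
        qed
        finally show ?thesis by simp
      next
        case False
        hence deg: "\<forall>u\<in>V. real (card (nbr E u)) \<le> D" by auto
        have cond: "exp (\<delta> * (ln D / real m) / 2) \<ge> 2 / \<delta>"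
        proof -
          have M1: "(4 * real m / \<delta>) * ln (2 / \<delta>) \<le> ln N" using lnM unfolding M_def by linarith
          have "ln (2 / \<delta>) \<le> \<delta> * (ln N / 2) / real m / 2"
            using M1 dl m0 by (simp add: field_simps)
          also have "\<dots> \<le> \<delta> * (ln D / real m) / 2"
            using LN dl m0 by (simp add: field_simps mult_left_mono)
          finally have "exp (ln (2 / \<delta>)) \<le> exp (\<delta> * (ln D / real m) / 2)" by simp
          thus ?thesis using dl by simp
        qed
        have A: "ln (real (card IS)) \<ge> real (card V) * (1 - \<delta>) * (ln D)^2 * (real m - 1) / (2 * real m * D * (1 + exp (- (ln D / real m)))^2)"
          by (rule thmA[OF D1 deg m0 dl cond])
        have x6: "exp (- (ln D / real m)) \<le> \<eta> / 6"
        proof -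
          have M2: "2 * real m * ln (6 / \<eta>) \<le> ln N" using lnM unfolding M_def by linarith
          have "ln (6 / \<eta>) \<le> (ln N / 2) / real m" using M2 m0 by (simp add: field_simps)
          also have "\<dots> \<le> ln D / real m" using LN m0 by (intro divide_right_mono) auto
          finally have "- (ln D / real m) \<le> ln (\<eta> / 6)" using eta by (simp add: ln_div)
          hence "exp (- (ln D / real m)) \<le> exp (ln (\<eta> / 6))" by simp
          thus ?thesis using eta by simp
        qed
        have "real (card V) * (1 - \<delta>) * (ln D)^2 * (real m - 1) / (2 * real m * D * (1 + exp (- (ln D / real m)))^2)
              \<ge> (c - \<eta> * c) * sqrt N * ln N"
          unfolding N_def
          by (rule asym[OF eta \<delta>_def mm c0 cc' _ _ _ LN[unfolded N_def] _ x6[unfolded N_def]])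
             (use N0 lnN0 in \<open>auto simp: N_def D_def\<close>)
        thus ?thesis using A by linarith
      qed
      have eps: "c - \<eta> * c = c - \<epsilon>" using c0 by (simp add: \<eta>_def)
      have cpos: "real (card IS) > 0" using card_IS_pos by linarith
      have "real (card IS) \<ge> exp ((c - \<epsilon>) * sqrt N * ln N)"
      proof (cases "ln (real (card IS)) \<ge> (c - \<eta> * c) * sqrt N * ln N")
        case True
        hence "exp ((c - \<epsilon>) * sqrt N * ln N) \<le> exp (ln (real (card IS)))" unfolding eps by simp
        thus ?thesis using cpos by simp
      next
        case False thus ?thesis using goal by auto
      qed
      thus "real (card (independent_sets V E)) \<ge> exp ((sqrt (2 * ln 2) / 4 - \<epsilon>) * sqrt (real (card V)) * ln (real (card V)))"
        by (simp add: c_def N_def)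
    qed
  qed
qed

end
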